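(* Almost surely, the function $\mathcal D:\mathbb R\to\mathbb R$ is continuous and non-decreasing.
   Context: Last passage percolation (LPP): for a sequence $f=(f_1,f_2,\dots)$ of continuous functions $\mathbb R\to\mathbb R$ (thought of as placed on horizontal lines indexed $1,2,\dots$ from top to bottom), $y\le x$ and $n\ge m$, an up-right path $\gamma$ from $(y,n)$ to $(x,m)$ is specified by jump times $y=t_{n+1}\le t_n\le\dots\le t_{m+1}\le t_m=x$ (the path is on line $i$ during $[t_{i+1},t_i]$ and jumps from line $i$ to line $i-1$ at time $t_i$); its weight is $f[\gamma]=\sum_{i=m}^n\big(f_i(t_i)-f_i(t_{i+1})\big)$, and $f[(y,n)\to(x,m)]=\sup_\gamma f[\gamma]$ over all such paths; a maximizing path is a geodesic. The parabolic Airy line ensemble $\mathcal P=(\mathcal P_1,\mathcal P_2,\dots)$ is the random $\mathbb N$-indexed collection of continuous non-intersecting curves $\mathcal P_1>\mathcal P_2>\cdots$ on $\mathbb R$ such that, for all $m\in\mathbb N$ and $t_1<\dots<t_m$, the point process $\{(\mathcal P_i(t_j)+t_j^2,t_j): i\in\mathbb N, j\le m\}$ is determinantal with the extended Airy kernel $K((x,t);(y,s))=\int_0^\infty e^{-u(t-s)}\mathrm{Ai}(x+u)\mathrm{Ai}(y+u)\,du$ for $t\ge s$ and $-\int_{-\infty}^0 e^{-u(t-s)}\mathrm{Ai}(x+u)\mathrm{Ai}(y+u)\,du$ for $t<s$. The parabolic Airy sheet $\mathcal S:\mathbb R^2\to\mathbb R$ is the continuous random process (unique in law) such that (i) $\mathcal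 S(\cdot+z,\cdot+z)\overset{d}{=}\mathcal S(\cdot,\cdot)$ for every $z\in\mathbb R$, and (ii) $\mathcal S$ can be coupled with $\mathcal P$ so that $\mathcal S(0,\cdot)=\mathcal P_1(\cdot)$ and, almost surely, for all rational $x,y,z$ with $y>0$ there is a random $K$ such that for all $k\ge K$, $\mathcal S(y,z)-\mathcal S(y,x)=\mathcal P[(y)_k\to(z,1)]-\mathcal P[(y)_k\to(x,1)]$, where $(y)_k=(-(k/(2y))^{1/2},k)$. Fix $y_a<y_b$ and define the weight difference profile $\mathcal D(x)=\mathcal S(y_b,x)-\mathcal S(y_a,x)$. *)

theory Defs
  imports "HOL-Probability.Probability"
begin

definition airy_ai :: "real \<Rightarrow> real" where
  "airy_ai x = (1 / pi) * Lim at_top (\<lambda>R. integral {0..R} (\<lambda>t. cos (t ^ 3 / 3 + x * t)))"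

definition airy_kernel :: "real \<times> real \<Rightarrow> real \<times> real \<Rightarrow> real" where
  "airy_kernel p q = (case p of (x, t) \<Rightarrow> case q of (y, s) \<Rightarrow>
     if s \<le> t then (LINT u:{0..}|lborel. exp (- u * (t - s)) * airy_ai (x + u) * airy_ai (y + u))
     else - (LINT u:{..0}|lborel. exp (- u * (t - s)) * airy_ai (x + u) * airy_ai (y + u)))"

definition det_n :: "nat \<Rightarrow> (nat \<Rightarrow> nat \<Rightarrow> real) \<Rightarrow> real" where
  "det_n n A = (\<Sum>\<sigma> | \<sigma> permutes {..<n}. of_int (sign \<sigma>) * (\<Prod>i<n. A i (\<sigma> i)))"

section \<open>Parabolic Airy line ensemble (lines indexed 1,2,...; index 0 unused)\<close>

definition index_tuples :: "nat \<Rightarrow> nat \<Rightarrow> (nat \<Rightarrow> nat \<times> nat) set" where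
  "index_tuples n m = {\<iota> \<in> {..<n} \<rightarrow>\<^sub>E ({1..} \<times> {..<m}). inj_on \<iota> {..<n}}"

text \<open>P is a parabolic Airy line ensemble on the probability space M:
  random continuous non-intersecting curves such that for all times tau_0 < ... < tau_(m-1)
  the point process {(P_i(tau_j) + tau_j^2, tau_j)} is determinantal with kernel airy_kernel
  (w.r.t. Lebesgue x counting measure): its n-point correlation functions are
  det[K(p_a, p_b)]_{a,b<n}, expressed via the factorial moment measures.\<close>
definition parabolic_airy_line_ensemble ::
  "'a measure \<Rightarrow> ('a \<Rightarrow> nat \<Rightarrow> real \<Rightarrow> real) \<Rightarrow> bool" where
  "parabolic_airy_line_ensemble M P \<longleftrightarrow>
    (\<forall>i t. (\<lambda>\<omega>. P \<omega> i t) \<in> borel_measurable M) \<and>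
    (AE \<omega> in M. \<forall>i\<ge>1. continuous_on UNIV (P \<omega> i) \<and> (\<forall>t. P \<omega> (Suc i) t < P \<omega> i t)) \<and>
    (\<forall>(m::nat) (\<tau>::nat \<Rightarrow> real). strict_mono_on {..<m} \<tau> \<longrightarrow>
      (\<forall>n\<ge>1. \<forall>F :: (nat \<Rightarrow> real \<times> real) \<Rightarrow> ennreal.
         F \<in> borel_measurable (PiM {..<n} (\<lambda>_. borel)) \<longrightarrow>
         (\<integral>\<^sup>+ \<omega>. (\<integral>\<^sup>+ \<iota>. F (\<lambda>k. if k < n then
                 (P \<omega> (fst (\<iota> k)) (\<tau> (snd (\<iota> k))) + (\<tau> (snd (\<iota> k)))\<^sup>2, \<tau> (snd (\<iota> k)))
               else undefined) \<partial>count_space (index_tuples n m)) \<partial>M)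
         = (\<Sum>j \<in> {..<n} \<rightarrow>\<^sub>E {..<m}.
              \<integral>\<^sup>+ x. F (\<lambda>k. if k < n then (x k, \<tau> (j k)) else undefined) *
                 ennreal (det_n n (\<lambda>a b. airy_kernel (x a, \<tau> (j a)) (x b, \<tau> (j b))))
              \<partial>(PiM {..<n} (\<lambda>_. lborel)))))"

definition lpp :: "(nat \<Rightarrow> real \<Rightarrow> real) \<Rightarrow> real \<times> nat \<Rightarrow> real \<times> nat \<Rightarrow> real" where
  "lpp f p q = (case p of (y, n) \<Rightarrow> case q of (x, m) \<Rightarrow>
     (SUP t \<in> {t :: nat \<Rightarrow> real. t (Suc n) = y \<and> t m = x \<and> (\<forall>i\<in>{m..n}. t (Suc i) \<le> t i)}.
        (\<Sum>i = m..n. f i (t i) - f i (t (Suc i)))))"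

definition airy_sheet_coupling ::
  "'a measure \<Rightarrow> ('a \<Rightarrow> nat \<Rightarrow> real \<Rightarrow> real) \<Rightarrow> ('a \<Rightarrow> real \<Rightarrow> real \<Rightarrow> real) \<Rightarrow> bool" where
  "airy_sheet_coupling M P S \<longleftrightarrow>
    parabolic_airy_line_ensemble M P \<and>
    (\<forall>x y. (\<lambda>\<omega>. S \<omega> x y) \<in> borel_measurable M) \<and>
    (AE \<omega> in M. continuous_on UNIV (\<lambda>(x, y). S \<omega> x y)) \<and>
    (\<forall>z. distr M (PiM UNIV (\<lambda>_. borel)) (\<lambda>\<omega> (x, y). S \<omega> (x + z) (y + z))
         = distr M (PiM UNIV (\<lambda>_. borel)) (\<lambda>\<omega> (x, y). S \<omega> x y)) \<and>
    (AE \<omega> in M. \<forall>x. S \<omega> 0 x = P \<omega> 1 x) \<and>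
    (AE \<omega> in M. \<forall>x\<in>\<rat>. \<forall>y\<in>\<rat>. \<forall>z\<in>\<rat>. y > 0 \<longrightarrow>
       (\<exists>K. \<forall>k::nat\<ge>K.
          S \<omega> y z - S \<omega> y x =
            lpp (P \<omega>) (- sqrt (real k / (2 * y)), k) (z, 1)
          - lpp (P \<omega>) (- sqrt (real k / (2 * y)), k) (x, 1)))"

end

theory Submission
  imports Defs
begin

definition TT :: "nat \<Rightarrow> real \<Rightarrow> real \<Rightarrow> (nat \<Rightarrow> real) set" where
  "TT k a x = {t. t (Suc k) = a \<and> t 1 = x \<and> (\<forall>i\<in>{1..k}. t (Suc i) \<le> t i)}"

definition WW :: "(nat \<Rightarrow> real \<Rightarrow> real) \<Rightarrow> nat \<Rightarrow> (nat \<Rightarrow> real) \<Rightarrow> real" where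
  "WW f k t = (\<Sum>i = 1..k. f i (t i) - f i (t (Suc i)))"

lemma lpp_eq: "lpp f (a, k) (x, 1) = (SUP t \<in> TT k a x. WW f k t)"
  by (simp add: lpp_def TT_def WW_def)

lemma TT_chain:
  assumes "t \<in> TT k a x" "1 \<le> i" "i \<le> j" "j \<le> Suc k"
  shows "t j \<le> t i"
  using assms(3,4)
proof (induction j rule: dec_induct)
  case base then show ?case by simp
next
  case (step n)
  have "t (Suc n) \<le> t n" using assms(1,2) step by (auto simp: TT_def)
  with step show ?case by simp
qed

lemma TT_range:
  assumes "t \<in> TT k a x" "1 \<le> i" "i \<le> Suc k"
  shows "a \<le> t i \<and> t i \<le> x"
proof -
  have "t (Suc k) \<le> t i" using TT_chain[OF assms(1,2,3)] by simp
  moreover have "t i \<le> t 1" using TT_chain[OF assms(1) _ assms(2)] assms(3) by simp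
  ultimately show ?thesis using assms(1) by (simp add: TT_def)
qed

lemma TT_nonempty:
  assumes "1 \<le> k" "a \<le> x"
  shows "(\<lambda>i. if i = Suc k then a else x) \<in> TT k a x"
  using assms by (auto simp: TT_def)

lemma WW_bdd:
  assumes "\<forall>i\<in>{1..k}. continuous_on UNIV (f i)"
  shows "bdd_above (WW f k ` TT k a x)"
proof -
  have "\<forall>i\<in>{1..k}. \<exists>B. \<forall>s\<in>{a..x}. \<bar>f i s\<bar> \<le> B"
  proof
    fix i assume i: "i \<in> {1..k}"
    have "compact (f i ` {a..x})"
      proof (rule compact_continuous_image)
      show "continuous_on {a..x} (f i)" using assms i by (meson continuous_on_subset subset_UNIV)
    qed simp
    then obtain B where "\<forall>y\<in>f i ` {a..x}. norm y \<le> B"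
      using compact_imp_bounded bounded_iff by metis
    then show "\<exists>B. \<forall>s\<in>{a..x}. \<bar>f i s\<bar> \<le> B" by auto
  qed
  then obtain B where B: "\<And>i s. i \<in> {1..k} \<Longrightarrow> s \<in> {a..x} \<Longrightarrow> \<bar>f i s\<bar> \<le> B i"
    by metis
  show ?thesis unfolding bdd_above_def
  proof (intro exI ballI)
    fix w assume "w \<in> WW f k ` TT k a x"
    then obtain t where t: "t \<in> TT k a x" and w: "w = WW f k t" by auto
    have "w \<le> (\<Sum>i = 1..k. 2 * B i)" unfolding w WW_def
    proof (rule sum_mono)
      fix i assume i: "i \<in> {1..k}"
      have "t i \<in> {a..x}" "t (Suc i) \<in> {a..x}" using TT_range[OF t] i by auto
      then have "\<bar>f i (t i)\<bar> \<le> B i" "\<bar>f i (t (Suc i))\<bar> \<le> B i" using B i by auto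
      then show "f i (t i) - f i (t (Suc i)) \<le> 2 * B i" by linarith
    qed
    then show "w \<le> (\<Sum>i = 1..k. 2 * B i)" .
  qed
qed

lemma WW_minmax:
  "WW f k (\<lambda>i. min (t i) (s i)) + WW f k (\<lambda>i. max (t i) (s i)) = WW f k t + WW f k s"
proof -
  have e: "\<And>i p q. f i (min p q) + f i (max p q) = f i p + f i (q::real)"
    by (simp add: min_def max_def)
  show ?thesis unfolding WW_def sum.distrib[symmetric]
    by (rule sum.cong) (simp_all add: algebra_simps e[simplified algebra_simps])
qed

lemma crossing:
  assumes cont: "\<forall>i\<in>{1..k}. continuous_on UNIV (f i)"
    and k: "1 \<le> k" and ab: "a \<le> b" and xz: "x \<le> z" and bx: "b \<le> x"
  shows "lpp f (a, k) (z, 1) + lpp f (b, k) (x, 1) \<le> lpp f (a, k) (x, 1) + lpp f (b, k) (z, 1)"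
proof -
  let ?L = "\<lambda>a x. SUP t \<in> TT k a x. WW f k t"
  have ne: "\<And>a x. a \<le> x \<Longrightarrow> TT k a x \<noteq> {}" using TT_nonempty[OF k] by blast
  have key: "WW f k t + WW f k s \<le> ?L a x + ?L b z" if t: "t \<in> TT k a z" and s: "s \<in> TT k b x" for t s
  proof -
    have mono_t: "\<forall>i\<in>{1..k}. t (Suc i) \<le> t i" and mono_s: "\<forall>i\<in>{1..k}. s (Suc i) \<le> s i"
      using t s by (auto simp: TT_def)
    have "(\<lambda>i. min (t i) (s i)) \<in> TT k a x"
      using t s ab xz mono_t mono_s by (auto simp: TT_def intro: min.mono)
    then have 1: "WW f k (\<lambda>i. min (t i) (s i)) \<le> ?L a x"
      by (intro cSUP_upper WW_bdd cont)
    have "(\<lambda>i. max (t i) (s i)) \<in> TT k b z"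
      using t s ab xz mono_t mono_s by (auto simp: TT_def intro: max.mono)
    then have 2: "WW f k (\<lambda>i. max (t i) (s i)) \<le> ?L b z"
      by (intro cSUP_upper WW_bdd cont)
    show ?thesis using 1 2 WW_minmax[of f k t s] by linarith
  qed
  have "?L a z \<le> ?L a x + ?L b z - ?L b x"
  proof (rule cSUP_least)
    show "TT k a z \<noteq> {}" using ne ab bx xz by simp
    fix t assume t: "t \<in> TT k a z"
    have "?L b x \<le> ?L a x + ?L b z - WW f k t"
    proof (rule cSUP_least)
      show "TT k b x \<noteq> {}" using ne bx by simp
      fix s assume "s \<in> TT k b x"
      then show "WW f k s \<le> ?L a x + ?L b z - WW f k t" using key[OF t, of s] by linarith
    qed
    then show "WW f k t \<le> ?L a x + ?L b z - ?L b x" by linarith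
  qed
  then show ?thesis unfolding lpp_eq by linarith
qed


lemma rat_step:
  fixes P :: "nat \<Rightarrow> real \<Rightarrow> real" and S :: "real \<Rightarrow> real \<Rightarrow> real"
  assumes cont: "\<forall>i\<ge>1. continuous_on UNIV (P i)"
    and rel: "\<forall>x\<in>\<rat>. \<forall>y\<in>\<rat>. \<forall>z\<in>\<rat>. y > 0 \<longrightarrow>
       (\<exists>K. \<forall>k::nat\<ge>K.
          S y z - S y x =
            lpp P (- sqrt (real k / (2 * y)), k) (z, 1)
          - lpp P (- sqrt (real k / (2 * y)), k) (x, 1))"
    and q: "qa \<in> \<rat>" "qb \<in> \<rat>" "x \<in> \<rat>" "z \<in> \<rat>" and qa: "0 < qa" "qa < qb" and xz: "x \<le> z"
  shows "S qa z - S qa x \<le> S qb z - S qb x"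
proof -
  obtain K1 where K1: "\<forall>k\<ge>K1. S qa z - S qa x =
            lpp P (- sqrt (real k / (2 * qa)), k) (z, 1) - lpp P (- sqrt (real k / (2 * qa)), k) (x, 1)"
    using rel[rule_format, OF q(3) q(1) q(4) qa(1)] by (elim exE)
  have qb0: "0 < qb" using qa by simp
  obtain K2 where K2: "\<forall>k\<ge>K2. S qb z - S qb x =
            lpp P (- sqrt (real k / (2 * qb)), k) (z, 1) - lpp P (- sqrt (real k / (2 * qb)), k) (x, 1)"
    using rel[rule_format, OF q(3) q(2) q(4) qb0] by (elim exE)
  define c where "c = \<bar>x\<bar> + \<bar>z\<bar>"
  define k where "k = max (max K1 K2) (max 1 (nat \<lceil>2 * qb * c\<^sup>2\<rceil>))"
  have kK: "k \<ge> K1" "k \<ge> K2" "k \<ge> 1" unfolding k_def by auto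
  have "nat \<lceil>2 * qb * c\<^sup>2\<rceil> \<le> k" unfolding k_def by (rule max.coboundedI2) simp
  then have "real (nat \<lceil>2 * qb * c\<^sup>2\<rceil>) \<le> real k" by (rule of_nat_mono)
  moreover have "2 * qb * c\<^sup>2 \<le> real (nat \<lceil>2 * qb * c\<^sup>2\<rceil>)" by (rule real_nat_ceiling_ge)
  ultimately have "real k \<ge> 2 * qb * c\<^sup>2" by linarith
  then have "c\<^sup>2 \<le> real k / (2 * qb)" using qa by (simp add: field_simps)
  then have cb: "c \<le> sqrt (real k / (2 * qb))" by (rule real_le_rsqrt)
  have "real k / (2 * qb) \<le> real k / (2 * qa)" using qa by (intro divide_left_mono) auto
  then have ab: "- sqrt (real k / (2 * qa)) \<le> - sqrt (real k / (2 * qb))" by simp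
  have bx: "- sqrt (real k / (2 * qb)) \<le> x" using cb unfolding c_def by linarith
  have contk: "\<forall>i\<in>{1..k}. continuous_on UNIV (P i)" using cont by auto
  have "lpp P (- sqrt (real k / (2 * qa)), k) (z, 1) + lpp P (- sqrt (real k / (2 * qb)), k) (x, 1)
      \<le> lpp P (- sqrt (real k / (2 * qa)), k) (x, 1) + lpp P (- sqrt (real k / (2 * qb)), k) (z, 1)"
    by (rule crossing[OF contk kK(3) ab xz bx])
  then show ?thesis using K1 K2 kK(1,2) by simp
qed

lemma ext1:
  fixes g :: "real \<Rightarrow> real"
  assumes "continuous_on UNIV g" "open U" "\<And>q. q \<in> \<rat> \<Longrightarrow> q \<in> U \<Longrightarrow> 0 \<le> g q" "p \<in> U"
  shows "0 \<le> g p"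
proof -
  have cl: "closed {x. 0 \<le> g x}"
    using closed_Collect_le[OF continuous_on_const assms(1), of 0] by simp
  have "U \<inter> \<rat> \<subseteq> {x. 0 \<le> g x}" using assms(3) by auto
  then have "closure (U \<inter> \<rat>) \<subseteq> {x. 0 \<le> g x}" using cl closure_minimal by blast
  moreover have "p \<in> closure (U \<inter> \<rat>)"
    using open_Int_closure_subset[OF assms(2), of \<rat>] assms(4) Rats_closure_real by auto
  ultimately show ?thesis by auto
qed

lemma mono_rat:
  fixes g :: "real \<Rightarrow> real"
  assumes c: "continuous_on UNIV g" and r: "\<And>x z. x \<in> \<rat> \<Longrightarrow> z \<in> \<rat> \<Longrightarrow> x < z \<Longrightarrow> g x \<le> g z"
  shows "mono g"
proof (rule monoI)
  fix x z :: real assume xz: "x \<le> z"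
  show "g x \<le> g z"
  proof (cases "x = z")
    case False
    then have xz: "x < z" using xz by simp
    have s1: "0 \<le> g z' - g q" if q: "q \<in> \<rat>" and qz: "q < z'" for q z'
    proof (rule ext1[where U="{q<..}" and g="\<lambda>z. g z - g q"])
      show "continuous_on UNIV (\<lambda>z. g z - g q)" by (intro continuous_on_diff c continuous_on_const)
      fix r' assume "r' \<in> \<rat>" "r' \<in> {q<..}"
      then show "0 \<le> g r' - g q" using r[OF q, of r'] by simp
    qed (use qz in auto)
    have "0 \<le> g z - g x"
    proof (rule ext1[where U="{..<z}" and g="\<lambda>x. g z - g x"])
      show "continuous_on UNIV (\<lambda>x. g z - g x)" by (intro continuous_on_diff c continuous_on_const)
      fix r' assume "r' \<in> \<rat>" "r' \<in> {..<z}"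
      then show "0 \<le> g z - g r'" using s1[of r' z] by simp
    qed (use xz in auto)
    then show ?thesis by simp
  qed simp
qed

lemma cont_sec:
  assumes "continuous_on UNIV (\<lambda>(x, y). F x y :: real)"
  shows "continuous_on UNIV (\<lambda>y. F b y)" "continuous_on UNIV (\<lambda>x. F x y)"
proof -
  have "continuous_on UNIV ((\<lambda>(x, y). F x y) \<circ> (\<lambda>y. (b, y)))"
    by (rule continuous_on_compose) (auto intro!: continuous_intros continuous_on_subset[OF assms])
  then show "continuous_on UNIV (\<lambda>y. F b y)" by (simp add: o_def)
  have "continuous_on UNIV ((\<lambda>(x, y). F x y) \<circ> (\<lambda>x. (x, y)))"
    by (rule continuous_on_compose) (auto intro!: continuous_intros continuous_on_subset[OF assms])
  then show "continuous_on UNIV (\<lambda>x. F x y)" by (simp add: o_def)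
qed

lemma G_real:
  fixes P :: "nat \<Rightarrow> real \<Rightarrow> real" and S :: "real \<Rightarrow> real \<Rightarrow> real"
  assumes cont: "\<forall>i\<ge>1. continuous_on UNIV (P i)"
    and contS: "continuous_on UNIV (\<lambda>(x, y). S x y)"
    and rel: "\<forall>x\<in>\<rat>. \<forall>y\<in>\<rat>. \<forall>z\<in>\<rat>. y > 0 \<longrightarrow>
       (\<exists>K. \<forall>k::nat\<ge>K.
          S y z - S y x =
            lpp P (- sqrt (real k / (2 * y)), k) (z, 1)
          - lpp P (- sqrt (real k / (2 * y)), k) (x, 1))"
    and ab: "0 < a" "a < b" and xz: "x \<le> z"
  shows "S b x - S a x \<le> S b z - S a z"
proof -
  note cs = cont_sec[OF contS]
  have st2: "S b x - S a x \<le> S b z - S a z" if "a \<in> \<rat>" "b \<in> \<rat>" "0 < a" "a < b" "x \<le> z" for a b x z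
  proof -
    have "mono (\<lambda>x. S b x - S a x)"
    proof (rule mono_rat)
      show "continuous_on UNIV (\<lambda>x. S b x - S a x)" using cs by (intro continuous_on_diff) auto
      fix x z :: real assume "x \<in> \<rat>" "z \<in> \<rat>" "x < z"
      then show "S b x - S a x \<le> S b z - S a z"
        using rat_step[OF cont rel that(1,2) \<open>x \<in> \<rat>\<close> \<open>z \<in> \<rat>\<close> that(3,4)] by linarith
    qed
    then show ?thesis using that(5) by (auto dest: monoD)
  qed
  have st3: "0 \<le> (S b z - S a z) - (S b x - S a x)" if "a \<in> \<rat>" "0 < a" "a < b" "x \<le> z" for a b
  proof (rule ext1[where U="{a<..}" and g="\<lambda>b. (S b z - S a z) - (S b x - S a x)"])
    show "continuous_on UNIV (\<lambda>b. (S b z - S a z) - (S b x - S a x))"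
      by (intro continuous_on_diff cs continuous_on_const)
    fix q assume "q \<in> \<rat>" "q \<in> {a<..}"
    then show "0 \<le> (S q z - S a z) - (S q x - S a x)" using st2[of a q x z] that by simp
  qed (use that in auto)
  have "0 \<le> (S b z - S a z) - (S b x - S a x)"
  proof (rule ext1[where U="{0<..<b}" and g="\<lambda>a. (S b z - S a z) - (S b x - S a x)"])
    show "continuous_on UNIV (\<lambda>a. (S b z - S a z) - (S b x - S a x))"
      by (intro continuous_on_diff cs continuous_on_const)
    fix q assume "q \<in> \<rat>" "q \<in> {0<..<b}"
    then show "0 \<le> (S b z - S q z) - (S b x - S q x)" using st3[of q b] xz by simp
  qed (use ab in auto)
  then show ?thesis by simp
qed


theorem lemma1p1:
  fixes M :: "'a measure" and P :: "'a \<Rightarrow> nat \<Rightarrow> real \<Rightarrow> real"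
    and S :: "'a \<Rightarrow> real \<Rightarrow> real \<Rightarrow> real" and ya yb :: real
  assumes "prob_space M"
    and "airy_sheet_coupling M P S"
    and "ya < yb"
  shows "AE \<omega> in M. continuous_on UNIV (\<lambda>x. S \<omega> yb x - S \<omega> ya x)
                  \<and> mono (\<lambda>x. S \<omega> yb x - S \<omega> ya x)"
proof -
  define N where "N = PiM (UNIV :: (real \<times> real) set) (\<lambda>_. (borel :: real measure))"
  note A = assms(2)[unfolded airy_sheet_coupling_def]
  have pe: "parabolic_airy_line_ensemble M P" using A by (rule conjunct1)
  have meas: "\<And>x y. (\<lambda>\<omega>. S \<omega> x y) \<in> borel_measurable M"
    using A[THEN conjunct2, THEN conjunct1] by simp
  have ac: "AE \<omega> in M. continuous_on UNIV (\<lambda>(x, y). S \<omega> x y)"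
    using A[THEN conjunct2, THEN conjunct2, THEN conjunct1] .
  have tr: "distr M N (\<lambda>\<omega> (x, y). S \<omega> (x + z) (y + z)) = distr M N (\<lambda>\<omega> (x, y). S \<omega> x y)" for z
    unfolding N_def using A[THEN conjunct2, THEN conjunct2, THEN conjunct2, THEN conjunct1] by (rule spec)
  have lp: "AE \<omega> in M. \<forall>x\<in>\<rat>. \<forall>y\<in>\<rat>. \<forall>z\<in>\<rat>. y > 0 \<longrightarrow>
       (\<exists>K. \<forall>k::nat\<ge>K.
          S \<omega> y z - S \<omega> y x =
            lpp (P \<omega>) (- sqrt (real k / (2 * y)), k) (z, 1)
          - lpp (P \<omega>) (- sqrt (real k / (2 * y)), k) (x, 1))"
    using A[THEN conjunct2, THEN conjunct2, THEN conjunct2, THEN conjunct2, THEN conjunct2] .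
  have pc: "AE \<omega> in M. \<forall>i\<ge>1. continuous_on UNIV (P \<omega> i) \<and> (\<forall>t. P \<omega> (Suc i) t < P \<omega> i t)"
    using pe[unfolded parabolic_airy_line_ensemble_def, THEN conjunct2, THEN conjunct1] .
  have G: "AE \<omega> in M. \<forall>a b x z. 0 < a \<longrightarrow> a < b \<longrightarrow> x \<le> z \<longrightarrow>
              S \<omega> b x - S \<omega> a x \<le> S \<omega> b z - S \<omega> a z"
    using ac lp pc
  proof eventually_elim
    case (elim \<omega>)
    have c1: "\<forall>i\<ge>1. continuous_on UNIV (P \<omega> i)" using elim(3) by blast
    show ?case
    proof (intro allI impI)
      fix a b x z :: real assume h: "0 < a" "a < b" "x \<le> z"
      show "S \<omega> b x - S \<omega> a x \<le> S \<omega> b z - S \<omega> a z"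
        by (rule G_real[OF c1 elim(1) elim(2) h])
    qed
  qed
  have fm: "(\<lambda>\<omega> (x, y). S \<omega> (x + c) (y + c)) \<in> measurable M N" for c
    unfolding N_def
  proof -
    have "(\<lambda>\<omega> p. (case p of (x, y) \<Rightarrow> S \<omega> (x + c) (y + c))) \<in> measurable M (PiM UNIV (\<lambda>_. borel))"
    proof (rule measurable_PiM_single')
      fix i :: "real \<times> real"
      obtain a b where i: "i = (a, b)" by (cases i)
      show "(\<lambda>\<omega>. case i of (x, y) \<Rightarrow> S \<omega> (x + c) (y + c)) \<in> borel_measurable M"
        unfolding i by (simp only: prod.case meas)
    next
      show "(\<lambda>\<omega> p. case p of (x, y) \<Rightarrow> S \<omega> (x + c) (y + c)) \<in> space M \<rightarrow> (\<Pi>\<^sub>E i\<in>UNIV. space (borel :: real measure))"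
        by (simp add: PiE_def extensional_def)
    qed
    then show "(\<lambda>\<omega> (x, y). S \<omega> (x + c) (y + c)) \<in> measurable M (PiM UNIV (\<lambda>_. borel))" by simp
  qed
  define Q where "Q = (\<lambda>g :: real \<times> real \<Rightarrow> real. \<forall>x\<in>\<rat>. \<forall>z\<in>\<rat>. x \<le> z \<longrightarrow> g (yb, x) - g (ya, x) \<le> g (yb, z) - g (ya, z))"
  have Qm: "{g \<in> space N. Q g} \<in> sets N"
  proof -
    have "Measurable.pred N Q" unfolding Q_def N_def
    proof (rule measurable_pred_countable(1)[OF countable_rat])
      fix x assume "x \<in> (\<rat> :: real set)"
      show "Measurable.pred (PiM UNIV (\<lambda>_. borel)) (\<lambda>g :: real \<times> real \<Rightarrow> real. \<forall>z\<in>\<rat>. x \<le> z \<longrightarrow> g (yb, x) - g (ya, x) \<le> g (yb, z) - g (ya, z))"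
      proof (rule measurable_pred_countable(1)[OF countable_rat])
        fix z assume "z \<in> (\<rat> :: real set)"
        show "Measurable.pred (PiM UNIV (\<lambda>_. borel)) (\<lambda>g :: real \<times> real \<Rightarrow> real. x \<le> z \<longrightarrow> g (yb, x) - g (ya, x) \<le> g (yb, z) - g (ya, z))"
        proof -
          have m1: "(\<lambda>g :: real \<times> real \<Rightarrow> real. g i) \<in> borel_measurable (PiM UNIV (\<lambda>_. borel))" for i
            by (rule measurable_component_singleton) simp
          have p: "Measurable.pred (PiM UNIV (\<lambda>_. borel)) (\<lambda>g :: real \<times> real \<Rightarrow> real. g (yb, x) - g (ya, x) \<le> g (yb, z) - g (ya, z))"
            unfolding pred_def by (intro borel_measurable_le borel_measurable_diff m1)
          show ?thesis
          proof (cases "x \<le> z")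
            case True then show ?thesis using p by simp
          next
            case False then show ?thesis by (simp add: pred_def)
          qed
        qed
      qed
    qed
    then show ?thesis by (simp add: pred_def)
  qed
  define w where "w = \<bar>ya\<bar> + 1"
  have "AE \<omega> in M. Q ((\<lambda>\<omega> (x, y). S \<omega> (x + w) (y + w)) \<omega>)"
    using G
  proof eventually_elim
    case (elim \<omega>)
    have "0 < ya + w" "ya + w < yb + w" using assms(3) unfolding w_def by auto
    note pos = this
    show ?case unfolding Q_def
    proof (intro ballI impI)
      fix x z :: real assume "x \<le> z"
      then have "x + w \<le> z + w" by simp
      from elim[rule_format, OF pos this]
      show "(case (yb, x) of (x, y) \<Rightarrow> S \<omega> (x + w) (y + w)) - (case (ya, x) of (x, y) \<Rightarrow> S \<omega> (x + w) (y + w))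
          \<le> (case (yb, z) of (x, y) \<Rightarrow> S \<omega> (x + w) (y + w)) - (case (ya, z) of (x, y) \<Rightarrow> S \<omega> (x + w) (y + w))"
        by (simp only: prod.case)
    qed
  qed
  then have "AE g in distr M N (\<lambda>\<omega> (x, y). S \<omega> (x + w) (y + w)). Q g"
    using AE_distr_iff[OF fm Qm] by blast
  then have "AE g in distr M N (\<lambda>\<omega> (x, y). S \<omega> x y). Q g" by (simp only: tr)
  moreover have "(\<lambda>\<omega> (x, y). S \<omega> x y) \<in> measurable M N" using fm[of 0] by simp
  ultimately have AQ: "AE \<omega> in M. Q ((\<lambda>\<omega> (x, y). S \<omega> x y) \<omega>)"
    using AE_distr_iff[OF _ Qm] by blast
  show ?thesis
    using AQ ac
  proof eventually_elim
    case (elim \<omega>)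
    note cs = cont_sec[OF elim(2)]
    have c: "continuous_on UNIV (\<lambda>x. S \<omega> yb x - S \<omega> ya x)"
      by (intro continuous_on_diff cs)
    have "mono (\<lambda>x. S \<omega> yb x - S \<omega> ya x)"
    proof (rule mono_rat[OF c])
      fix x z :: real assume "x \<in> \<rat>" "z \<in> \<rat>" "x < z"
      then show "S \<omega> yb x - S \<omega> ya x \<le> S \<omega> yb z - S \<omega> ya z"
        using elim(1) unfolding Q_def by simp
    qed
    with c show ?case by simp
  qed
qed

end
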